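(* (Rodrigues formula.) Let $k\in\mathbb{N}$, let $H_k\in\mathcal{H}_k$ be a Dunkl-harmonic of degree $k$, and let $t$ be a positive integer. Then the Clifford--Hermite polynomial $C\!H_{2t}^{\mu}(H_k)=(D_+)^{2t}H_k$ satisfies \[ C\!H_{2t}^{\mu}(H_k) = \exp(|x|^2/2)\,\big(-\Delta_{\kappa} - |x|^2 + 2\mathbb{E} + \mu\big)^{t}\,\big(\exp(-|x|^2/2)\, H_k\big) = \exp(|x|^2)\,(-\Delta_{\kappa})^t\,\big(\exp(-|x|^2)\, H_k\big). \]
   Context: Let $R\subset\mathbb{R}^m$ be a reduced root system normalized so that $\langle\alpha,\alpha\rangle=2$ for all $\alpha\in R$, with positive subsystem $R_+$, and let $G\subset O(m)$ be the finite reflection group generated by the reflections $r_\alpha(x)=x-2\frac{\langle\alpha,x\rangle}{|\alpha|^2}\alpha$, $\alpha\in R$. Let $\kappa:R\to\mathbb{C}$ be a $G$-invariant multiplicity function, $\kappa_\alpha=\kappa(\alpha)$. The Dunkl operators are $T_i f(x)=\partial_{x_i}f(x)+\sum_{\alpha\in R_+}\kappa_\alpha\alpha_i\frac{f(x)-f(r_\alpha x)}{\langle\alpha,x\rangle}$, $i=1,\dots,m$; they commute. The Dunkl Laplacian is $\Delta_\kappa=\sum_{i=1}^m T_i^2$. Put $\gamma=\sum_{\alpha\in R_+}\kappa_\alpha$ and $\mu=m+2\gamma$ (the Dunkl dimension). $\mathbb{E}=\sum_{i=1}^m x_i\partial_{x_i}$ is the Euler operator. $\mathcal{P}_k$ denotes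 real homogeneous polynomials of degree $k$ on $\mathbb{R}^m$ and $\mathcal{H}_k=\mathcal{P}_k\cap\ker\Delta_\kappa$ the Dunkl-harmonics of degree $k$. Let $\mathcal{C}l_{0,m}$ be the Clifford algebra generated by $e_1,\dots,e_m$ with $e_ie_j+e_je_i=-2\delta_{ij}$. Set $\underline{x}=\sum_i e_ix_i$, the Dunkl Dirac operator $D_\kappa=\sum_i e_iT_i$, and $D_+=-D_\kappa+2\underline{x}$, acting on $\mathcal{C}l_{0,m}$-valued polynomials. The Clifford--Hermite polynomial of degree $2t$ associated with $H_k\in\mathcal{H}_k$ is $C\!H_{2t}^{\mu}(H_k)=(D_+)^{2t}H_k$ (a scalar polynomial, since $D_+^2=-\Delta_\kappa-4|x|^2+2(2\mathbb{E}+\mu)$). *)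

theory Defs
  imports "HOL-Analysis.Analysis"
begin

definition refl :: "real^'n \<Rightarrow> real^'n \<Rightarrow> real^'n" where
  "refl \<alpha> x = x - (2 * (\<alpha> \<bullet> x) / (\<alpha> \<bullet> \<alpha>)) *\<^sub>R \<alpha>"

definition root_system :: "(real^'n) set \<Rightarrow> bool" where
  "root_system R \<longleftrightarrow> finite R \<and> 0 \<notin> R
     \<and> (\<forall>\<alpha>\<in>R. \<alpha> \<bullet> \<alpha> = 2)
     \<and> (\<forall>\<alpha>\<in>R. \<forall>\<beta>\<in>R. refl \<alpha> \<beta> \<in> R)
     \<and> (\<forall>\<alpha>\<in>R. \<forall>c::real. c *\<^sub>R \<alpha> \<in> R \<longrightarrow> c = 1 \<or> c = -1)"

definition positive_subsystem :: "(real^'n) set \<Rightarrow> (real^'n) set \<Rightarrow> bool" where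
  "positive_subsystem R Rp \<longleftrightarrow>
     (\<exists>\<beta>. (\<forall>\<alpha>\<in>R. \<alpha> \<bullet> \<beta> \<noteq> 0) \<and> Rp = {\<alpha>\<in>R. \<alpha> \<bullet> \<beta> > 0})"

inductive_set refl_group :: "(real^'n) set \<Rightarrow> (real^'n \<Rightarrow> real^'n) set"
  for R where
    id_in: "id \<in> refl_group R"
  | step: "g \<in> refl_group R \<Longrightarrow> \<alpha> \<in> R \<Longrightarrow> refl \<alpha> \<circ> g \<in> refl_group R"

definition G_invariant :: "(real^'n) set \<Rightarrow> (real^'n \<Rightarrow> complex) \<Rightarrow> bool" where
  "G_invariant R \<kappa> \<longleftrightarrow> (\<forall>g\<in>refl_group R. \<forall>\<alpha>\<in>R. \<kappa> (g \<alpha>) = \<kappa> \<alpha>)"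

definition partial :: "'n::finite \<Rightarrow> (real^'n \<Rightarrow> complex) \<Rightarrow> real^'n \<Rightarrow> complex" where
  "partial i f x = vector_derivative (\<lambda>s. f (x + s *\<^sub>R axis i 1)) (at 0)"

definition diff_quot :: "real^'n \<Rightarrow> (real^'n \<Rightarrow> complex) \<Rightarrow> real^'n \<Rightarrow> complex" where
  "diff_quot \<alpha> f x =
     (if \<alpha> \<bullet> x \<noteq> 0 then (f x - f (refl \<alpha> x)) / complex_of_real (\<alpha> \<bullet> x)
      else Lim (at x within {y. \<alpha> \<bullet> y \<noteq> 0})
             (\<lambda>y. (f y - f (refl \<alpha> y)) / complex_of_real (\<alpha> \<bullet> y)))"

definition dunkl :: "(real^'n::finite) set \<Rightarrow> (real^'n \<Rightarrow> complex) \<Rightarrow> 'n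
      \<Rightarrow> (real^'n \<Rightarrow> complex) \<Rightarrow> real^'n \<Rightarrow> complex" where
  "dunkl Rp \<kappa> i f x = partial i f x
     + (\<Sum>\<alpha>\<in>Rp. \<kappa> \<alpha> * complex_of_real (\<alpha> $ i) * diff_quot \<alpha> f x)"

definition dunkl_laplacian :: "(real^'n::finite) set \<Rightarrow> (real^'n \<Rightarrow> complex)
      \<Rightarrow> (real^'n \<Rightarrow> complex) \<Rightarrow> real^'n \<Rightarrow> complex" where
  "dunkl_laplacian Rp \<kappa> f x = (\<Sum>i\<in>UNIV. dunkl Rp \<kappa> i (dunkl Rp \<kappa> i f) x)"

definition euler_op :: "(real^'n::finite \<Rightarrow> complex) \<Rightarrow> real^'n \<Rightarrow> complex" where
  "euler_op f x = (\<Sum>i\<in>UNIV. complex_of_real (x $ i) * partial i f x)"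

definition dunkl_gamma :: "(real^'n) set \<Rightarrow> (real^'n \<Rightarrow> complex) \<Rightarrow> complex" where
  "dunkl_gamma Rp \<kappa> = (\<Sum>\<alpha>\<in>Rp. \<kappa> \<alpha>)"

definition dunkl_dim :: "(real^'n::finite) set \<Rightarrow> (real^'n \<Rightarrow> complex) \<Rightarrow> complex" where
  "dunkl_dim Rp \<kappa> = of_nat CARD('n) + 2 * dunkl_gamma Rp \<kappa>"

definition homogeneous_poly :: "nat \<Rightarrow> ((real^'n::finite) \<Rightarrow> real) \<Rightarrow> bool" where
  "homogeneous_poly k H \<longleftrightarrow>
     (\<exists>c :: ('n \<Rightarrow> nat) \<Rightarrow> real.
        H = (\<lambda>x. \<Sum>a\<in>{a. sum a UNIV = k}. c a * (\<Prod>i\<in>UNIV. (x $ i) ^ a i)))"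

definition dunkl_harmonic :: "(real^'n::finite) set \<Rightarrow> (real^'n \<Rightarrow> complex) \<Rightarrow> nat
      \<Rightarrow> (real^'n \<Rightarrow> real) \<Rightarrow> bool" where
  "dunkl_harmonic Rp \<kappa> k H \<longleftrightarrow> homogeneous_poly k H
     \<and> (\<forall>x. dunkl_laplacian Rp \<kappa> (\<lambda>y. complex_of_real (H y)) x = 0)"

section \<open>Clifford algebra \<open>Cl_{0,m}\<close> (complexified), basis \<open>e_A\<close>, \<open>A \<subseteq> {1..m}\<close>\<close>

type_synonym 'n cl = "'n set \<Rightarrow> complex"

text \<open>\<open>e_A e_B = sign(A,B) e_{A \<triangle> B}\<close>, with \<open>e_i e_j + e_j e_i = -2 \<delta>_ij\<close>.\<close>
definition cl_sign :: "'n::{finite,linorder} set \<Rightarrow> 'n set \<Rightarrow> complex" where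
  "cl_sign A B = (-1) ^ (card {(i,j). i \<in> A \<and> j \<in> B \<and> j < i} + card (A \<inter> B))"

definition cl_mult :: "'n::{finite,linorder} cl \<Rightarrow> 'n cl \<Rightarrow> 'n cl" where
  "cl_mult a b = (\<lambda>C. \<Sum>A\<in>UNIV. \<Sum>B\<in>UNIV.
      if (A - B) \<union> (B - A) = C then cl_sign A B * a A * b B else 0)"

definition cl_e :: "'n \<Rightarrow> 'n cl" where
  "cl_e i = (\<lambda>A. if A = {i} then 1 else 0)"

definition cl_scalar :: "complex \<Rightarrow> 'n cl" where
  "cl_scalar z = (\<lambda>A. if A = {} then z else 0)"

definition cl_vec :: "real^'n::finite \<Rightarrow> 'n cl" where
  "cl_vec x = (\<lambda>A. \<Sum>i\<in>UNIV. complex_of_real (x $ i) * cl_e i A)"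

definition dunkl_cl :: "(real^'n::finite) set \<Rightarrow> (real^'n \<Rightarrow> complex) \<Rightarrow> 'n
      \<Rightarrow> (real^'n \<Rightarrow> 'n cl) \<Rightarrow> real^'n \<Rightarrow> 'n cl" where
  "dunkl_cl Rp \<kappa> i F x = (\<lambda>A. dunkl Rp \<kappa> i (\<lambda>y. F y A) x)"

definition dunkl_dirac :: "((real,'n::{finite,linorder}) vec) set \<Rightarrow> ((real,'n) vec \<Rightarrow> complex)
      \<Rightarrow> ((real,'n) vec \<Rightarrow> 'n cl) \<Rightarrow> (real,'n) vec \<Rightarrow> 'n cl" where
  "dunkl_dirac Rp \<kappa> F x =
     (\<lambda>C. \<Sum>i\<in>UNIV. cl_mult (cl_e i) (dunkl_cl Rp \<kappa> i F x) C)"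

definition D_plus :: "((real,'n::{finite,linorder}) vec) set \<Rightarrow> ((real,'n) vec \<Rightarrow> complex)
      \<Rightarrow> ((real,'n) vec \<Rightarrow> 'n cl) \<Rightarrow> (real,'n) vec \<Rightarrow> 'n cl" where
  "D_plus Rp \<kappa> F x =
     (\<lambda>C. - dunkl_dirac Rp \<kappa> F x C + 2 * cl_mult (cl_vec x) (F x) C)"

definition clifford_hermite :: "((real,'n::{finite,linorder}) vec) set \<Rightarrow> ((real,'n) vec \<Rightarrow> complex) \<Rightarrow> nat
      \<Rightarrow> ((real,'n) vec \<Rightarrow> real) \<Rightarrow> (real,'n) vec \<Rightarrow> 'n cl" where
  "clifford_hermite Rp \<kappa> s H =
     (D_plus Rp \<kappa> ^^ s) (\<lambda>x. cl_scalar (complex_of_real (H x)))"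

end

theory Submission
  imports Defs
begin


inductive pf :: "((real^'n::finite) \<Rightarrow> complex) \<Rightarrow> bool" where
  pf_const: "pf (\<lambda>x. c)"
| pf_xmul: "pf f \<Longrightarrow> pf (\<lambda>x. complex_of_real (x$l) * f x)"
| pf_add: "pf f \<Longrightarrow> pf g \<Longrightarrow> pf (\<lambda>x. f x + g x)"

lemma pf_cmul: "pf f \<Longrightarrow> pf (\<lambda>x. c * f x)"
proof (induction rule: pf.induct)
  case (pf_const d) then show ?case using pf.pf_const[of "c*d"] by simp
next
  case (pf_xmul f l)
  have "(\<lambda>x. c * (complex_of_real (x$l) * f x)) = (\<lambda>x. complex_of_real (x$l) * (c * f x))"
    by (auto simp: algebra_simps)
  then show ?case using pf.pf_xmul[OF pf_xmul.IH] by simp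
next
  case (pf_add f g)
  have "(\<lambda>x. c * (f x + g x)) = (\<lambda>x. c * f x + c * g x)" by (auto simp: algebra_simps)
  then show ?case using pf.pf_add[OF pf_add.IH] by simp
qed

lemma pf_mult: "pf f \<Longrightarrow> pf g \<Longrightarrow> pf (\<lambda>x. f x * g x)"
proof (induction rule: pf.induct)
  case (pf_const d) then show ?case using pf_cmul[of g d] by simp
next
  case (pf_xmul f l)
  have "(\<lambda>x. complex_of_real (x$l) * f x * g x) = (\<lambda>x. complex_of_real (x$l) * (f x * g x))"
    by (auto simp: algebra_simps)
  then show ?case using pf.pf_xmul pf_xmul by simp
next
  case (pf_add f g')
  have "(\<lambda>x. (f x + g' x) * g x) = (\<lambda>x. f x * g x + g' x * g x)" by (auto simp: algebra_simps)
  then show ?case using pf.pf_add pf_add by simp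
qed

lemma pf_coord: "pf (\<lambda>x. complex_of_real (x$l))"
  using pf_xmul[OF pf_const[of 1]] by simp

lemma pf_minus: "pf f \<Longrightarrow> pf (\<lambda>x. - f x)"
  using pf_cmul[of f "-1"] by simp

lemma pf_diff: "pf f \<Longrightarrow> pf g \<Longrightarrow> pf (\<lambda>x. f x - g x)"
  using pf_add[OF _ pf_minus] by (simp add: )

lemma pf_sum: "(\<And>a. a \<in> I \<Longrightarrow> pf (F a)) \<Longrightarrow> pf (\<lambda>x. \<Sum>a\<in>I. F a x)"
proof (induction I rule: infinite_finite_induct)
  case (infinite A) then show ?case using pf_const by simp
next
  case empty then show ?case using pf_const by simp
next
  case (insert a A) then show ?case using pf_add[of "F a" "\<lambda>x. \<Sum>a\<in>A. F a x"] by simp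
qed

lemma pf_prod: "(\<And>a. a \<in> I \<Longrightarrow> pf (F a)) \<Longrightarrow> pf (\<lambda>x. \<Prod>a\<in>I. F a x)"
proof (induction I rule: infinite_finite_induct)
  case (infinite A) then show ?case using pf_const by simp
next
  case empty then show ?case using pf_const by simp
next
  case (insert a A) then show ?case using pf_mult[of "F a" "\<lambda>x. \<Prod>a\<in>A. F a x"] by simp
qed

lemma pf_power: "pf f \<Longrightarrow> pf (\<lambda>x. f x ^ n)"
  by (induction n) (auto intro: pf_const pf_mult)

lemma pf_cont: "pf f \<Longrightarrow> continuous_on UNIV f"
proof (induction rule: pf.induct)
  case (pf_xmul f l)
  have "continuous_on UNIV (\<lambda>x::real^'a. complex_of_real (x$l))"
    by (intro continuous_intros)
  then show ?case using pf_xmul by (intro continuous_intros)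
qed (auto intro!: continuous_intros)

lemma pf_isCont: "pf f \<Longrightarrow> isCont f x"
  using pf_cont continuous_on_eq_continuous_at by blast

lemma coord_deriv: "((\<lambda>x::real^'n::finite. complex_of_real (x$l)) has_derivative (\<lambda>h. complex_of_real (h$l))) F"
  by (intro has_derivative_of_real bounded_linear_imp_has_derivative bounded_linear_vec_nth)

lemma pf_differentiable: "pf f \<Longrightarrow> f differentiable (at x)"
proof (induction rule: pf.induct)
  case (pf_xmul f l)
  have "(\<lambda>x::real^'a. complex_of_real (x$l)) differentiable (at x)"
    using coord_deriv differentiable_def by blast
  then show ?case using pf_xmul by (intro differentiable_mult)
qed (auto intro!: differentiable_add)

lemma partial_deriv:
  assumes "(f has_derivative D) (at x)"
  shows "partial i f x = D (axis i 1)"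
proof -
  have l: "linear D" using assms has_derivative_linear by blast
  have "((\<lambda>s::real. x + s *\<^sub>R axis i 1) has_derivative (\<lambda>s. s *\<^sub>R axis i 1)) (at 0)"
    by (auto intro!: derivative_eq_intros)
  moreover have "((\<lambda>s::real. x + s *\<^sub>R axis i 1) 0) = x" by simp
  ultimately have "((\<lambda>s. f (x + s *\<^sub>R axis i 1)) has_derivative (\<lambda>s. D (s *\<^sub>R axis i 1))) (at 0)"
    using has_derivative_compose[of "\<lambda>s::real. x + s *\<^sub>R axis i 1" _ 0 UNIV f D] assms by simp
  moreover have "(\<lambda>s. D (s *\<^sub>R axis i 1)) = (\<lambda>s. s *\<^sub>R D (axis i 1))"
    using linear_scale[OF l] by auto
  ultimately have "((\<lambda>s. f (x + s *\<^sub>R axis i 1)) has_vector_derivative D (axis i 1)) (at 0)"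
    by (simp add: has_vector_derivative_def)
  then show ?thesis unfolding partial_def by (rule vector_derivative_at)
qed

lemma partial_add:
  assumes "f differentiable (at x)" "g differentiable (at x)"
  shows "partial i (\<lambda>y. f y + g y) x = partial i f x + partial i g x"
proof -
  obtain Df Dg where d: "(f has_derivative Df) (at x)" "(g has_derivative Dg) (at x)"
    using assms differentiable_def by blast
  have "((\<lambda>y. f y + g y) has_derivative (\<lambda>h. Df h + Dg h)) (at x)"
    using d by (intro has_derivative_add)
  from partial_deriv[OF this] partial_deriv[OF d(1)] partial_deriv[OF d(2)] show ?thesis by simp
qed

lemma partial_mult:
  assumes "f differentiable (at x)" "g differentiable (at x)"
  shows "partial i (\<lambda>y. f y * g y) x = partial i f x * g x + f x * partial i g x"
proof -
  obtain Df Dg where d: "(f has_derivative Df) (at x)" "(g has_derivative Dg) (at x)"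
    using assms differentiable_def by blast
  have "((\<lambda>y. f y * g y) has_derivative (\<lambda>h. f x * Dg h + Df h * g x)) (at x)"
    using d by (intro has_derivative_mult)
  from partial_deriv[OF this] partial_deriv[OF d(1)] partial_deriv[OF d(2)] show ?thesis
    by (simp add: algebra_simps)
qed

lemma partial_const: "partial i (\<lambda>y. c) x = 0"
  using partial_deriv[of "\<lambda>y. c" "\<lambda>h. 0" x i] by simp

lemma partial_coord: "partial i (\<lambda>y. complex_of_real (y$l)) x = (if i = l then 1 else 0)"
  using partial_deriv[OF coord_deriv[of l]] by (simp add: axis_def)

lemma partial_xmul:
  fixes f :: "real^'n::finite \<Rightarrow> complex"
  assumes "f differentiable (at x)"
  shows "partial i (\<lambda>y. complex_of_real (y$l) * f y) x = (if i = l then f x else 0) + complex_of_real (x$l) * partial i f x"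
proof -
  have "(\<lambda>y::real^'n. complex_of_real (y$l)) differentiable (at x)"
    using coord_deriv differentiable_def by blast
  from partial_mult[OF this assms, of i] show ?thesis by (simp add: partial_coord)
qed

lemma pf_partial: "pf f \<Longrightarrow> pf (partial i f)"
proof (induction rule: pf.induct)
  case (pf_const c) then show ?case by (simp add: partial_const pf.pf_const)
next
  case (pf_xmul f l)
  have e: "partial i (\<lambda>y. complex_of_real (y$l) * f y) = (\<lambda>x. (if i = l then f x else 0) + complex_of_real (x$l) * partial i f x)"
    using partial_xmul pf_differentiable[OF pf_xmul.hyps] by blast
  show ?case unfolding e
    by (intro pf_add pf.pf_xmul pf_xmul.IH) (cases "i = l", auto intro: pf_xmul.hyps pf_const)
next
  case (pf_add f g)
  have "partial i (\<lambda>y. f y + g y) = (\<lambda>x. partial i f x + partial i g x)"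
    using partial_add pf_differentiable pf_add.hyps by blast
  then show ?case using pf.pf_add pf_add.IH by simp
qed



lemma refl_simp: "\<alpha> \<bullet> \<alpha> = 2 \<Longrightarrow> refl \<alpha> x = x - (\<alpha> \<bullet> x) *\<^sub>R \<alpha>"
  by (simp add: refl_def)

lemma refl_nth: "\<alpha> \<bullet> \<alpha> = 2 \<Longrightarrow> (refl \<alpha> x)$l = x$l - (\<alpha> \<bullet> x) * \<alpha>$l"
  by (simp add: refl_simp)

lemma inner_refl: "\<alpha> \<bullet> \<alpha> = 2 \<Longrightarrow> \<alpha> \<bullet> refl \<alpha> x = - (\<alpha> \<bullet> x)"
  by (simp add: refl_simp inner_diff_right)

lemma refl_refl: "\<alpha> \<bullet> \<alpha> = 2 \<Longrightarrow> refl \<alpha> (refl \<alpha> x) = x"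
  by (simp add: refl_simp inner_diff_right algebra_simps)

lemma refl_hyper: "\<alpha> \<bullet> x = 0 \<Longrightarrow> refl \<alpha> x = x"
  by (simp add: refl_def)

lemma norm_refl: "\<alpha> \<bullet> \<alpha> = 2 \<Longrightarrow> norm (refl \<alpha> x) = norm x"
proof -
  assume a: "\<alpha> \<bullet> \<alpha> = 2"
  have "norm (refl \<alpha> x) ^ 2 = norm x ^ 2"
    unfolding power2_norm_eq_inner refl_simp[OF a]
    by (simp add: inner_diff_left inner_diff_right a inner_commute algebra_simps power2_eq_square)
  then show ?thesis by (simp add: power2_eq_iff_nonneg)
qed

lemma pf_refl: "pf f \<Longrightarrow> \<alpha> \<bullet> \<alpha> = 2 \<Longrightarrow> pf (\<lambda>x. f (refl \<alpha> x))"
proof (induction rule: pf.induct)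
  case (pf_const c) then show ?case by (simp add: pf.pf_const)
next
  case (pf_xmul f l)
  have "(\<lambda>x. complex_of_real ((refl \<alpha> x)$l) * f (refl \<alpha> x)) =
        (\<lambda>x. (complex_of_real (x$l) - (\<Sum>k\<in>UNIV. complex_of_real (\<alpha>$k * \<alpha>$l) * complex_of_real (x$k))) * f (refl \<alpha> x))"
  proof -
    have "\<And>x. complex_of_real (\<alpha>$l * (\<Sum>i\<in>UNIV. x$i * \<alpha>$i)) = (\<Sum>k\<in>UNIV. complex_of_real (\<alpha>$k * \<alpha>$l) * complex_of_real (x$k))"
      unfolding of_real_mult[symmetric] of_real_sum[symmetric] by (simp add: sum_distrib_left mult_ac)
    then show ?thesis by (simp add: refl_nth[OF pf_xmul.prems] inner_vec_def algebra_simps)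
  qed
  moreover have "pf (\<lambda>x. complex_of_real (x$l) - (\<Sum>k\<in>UNIV. complex_of_real (\<alpha>$k * \<alpha>$l) * complex_of_real (x$k)))"
    by (intro pf_diff pf_coord pf_sum pf_cmul)
  ultimately show ?case using pf_mult pf_xmul by simp
next
  case (pf_add f g) then show ?case using pf.pf_add by simp
qed

lemma hyper_limpt:
  fixes \<alpha> x :: "real^'n::finite"
  assumes "\<alpha> \<noteq> 0" "\<alpha> \<bullet> x = 0"
  shows "x islimpt {y. \<alpha> \<bullet> y \<noteq> 0}"
  unfolding islimpt_approachable
proof (intro allI impI)
  fix e :: real assume e: "e > 0"
  define t where "t = e / (2 * norm \<alpha>)"
  have na: "norm \<alpha> > 0" using assms by simp
  have t: "t > 0" using e na unfolding t_def by (intro divide_pos_pos) auto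
  have aa: "\<alpha> \<bullet> \<alpha> > 0" using assms by simp
  have "\<alpha> \<bullet> (x + t *\<^sub>R \<alpha>) = t * (\<alpha> \<bullet> \<alpha>)" using assms(2) by (simp add: inner_add_right)
  then have 1: "\<alpha> \<bullet> (x + t *\<^sub>R \<alpha>) \<noteq> 0" using t aa by simp
  have 2: "x + t *\<^sub>R \<alpha> \<noteq> x" using t assms(1) by simp
  have "dist (x + t *\<^sub>R \<alpha>) x = t * norm \<alpha>" using t by (simp add: dist_norm)
  also have "\<dots> = e / 2" using na unfolding t_def by simp
  also have "\<dots> < e" using e by simp
  finally show "\<exists>x'\<in>{y. \<alpha> \<bullet> y \<noteq> 0}. x' \<noteq> x \<and> dist x' x < e" using 1 2 by blast
qed

lemma dq_ext:
  assumes a: "\<alpha> \<noteq> 0" and h: "continuous_on UNIV h"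
    and q: "\<And>x. \<alpha> \<bullet> x \<noteq> 0 \<Longrightarrow> (f x - f (refl \<alpha> x)) / complex_of_real (\<alpha> \<bullet> x) = h x"
  shows "diff_quot \<alpha> f = h"
proof
  fix x
  show "diff_quot \<alpha> f x = h x"
  proof (cases "\<alpha> \<bullet> x = 0")
    case False then show ?thesis using q by (simp add: diff_quot_def)
  next
    case True
    let ?S = "{y. \<alpha> \<bullet> y \<noteq> 0}"
    have nb: "at x within ?S \<noteq> bot" using hyper_limpt[OF a True] by (simp add: trivial_limit_within)
    have "isCont h x" using h by (simp add: continuous_on_eq_continuous_at)
    then have "(h \<longlongrightarrow> h x) (at x within ?S)"
      unfolding isCont_def by (rule tendsto_within_subset[OF _ subset_UNIV])
    moreover have "eventually (\<lambda>y. h y = (f y - f (refl \<alpha> y)) / complex_of_real (\<alpha> \<bullet> y)) (at x within ?S)"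
      unfolding eventually_at_filter by (rule always_eventually) (auto simp: q)
    ultimately have "((\<lambda>y. (f y - f (refl \<alpha> y)) / complex_of_real (\<alpha> \<bullet> y)) \<longlongrightarrow> h x) (at x within ?S)"
      by (rule Lim_transform_eventually)
    then show ?thesis using True nb by (simp add: diff_quot_def tendsto_Lim)
  qed
qed

lemma norm2_nz: "\<alpha> \<bullet> \<alpha> = 2 \<Longrightarrow> \<alpha> \<noteq> 0" by auto

lemma dq_off: "\<alpha> \<bullet> x \<noteq> 0 \<Longrightarrow> diff_quot \<alpha> f x = (f x - f (refl \<alpha> x)) / complex_of_real (\<alpha> \<bullet> x)"
  by (simp add: diff_quot_def)

lemma dq_const: "\<alpha> \<bullet> \<alpha> = 2 \<Longrightarrow> diff_quot \<alpha> (\<lambda>x. c) = (\<lambda>x. 0)"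
  by (rule dq_ext) (auto simp: norm2_nz)

lemma dq_add:
  assumes "\<alpha> \<bullet> \<alpha> = 2" "continuous_on UNIV (diff_quot \<alpha> f)" "continuous_on UNIV (diff_quot \<alpha> g)"
  shows "diff_quot \<alpha> (\<lambda>x. f x + g x) = (\<lambda>x. diff_quot \<alpha> f x + diff_quot \<alpha> g x)"
  apply (rule dq_ext)
    apply (simp add: norm2_nz assms)
   apply (intro continuous_on_add assms)
  by (simp add: dq_off add_divide_distrib diff_divide_distrib)

lemma cont_refl:
  assumes a: "\<alpha> \<bullet> \<alpha> = 2" and c: "continuous_on UNIV f"
  shows "continuous_on UNIV (\<lambda>x. f (refl \<alpha> x))"
proof (rule continuous_on_compose2[OF c])
  show "continuous_on UNIV (refl \<alpha>)" unfolding refl_simp[OF a] by (intro continuous_intros)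
qed auto

lemma dq_xmul:
  assumes a: "\<alpha> \<bullet> \<alpha> = 2" and c: "continuous_on UNIV (diff_quot \<alpha> f)" "continuous_on UNIV f"
  shows "diff_quot \<alpha> (\<lambda>x. complex_of_real (x$l) * f x)
     = (\<lambda>x. complex_of_real (x$l) * diff_quot \<alpha> f x + complex_of_real (\<alpha>$l) * f (refl \<alpha> x))"
proof (rule dq_ext)
  show "\<alpha> \<noteq> 0" using norm2_nz[OF a] .
  have cr: "continuous_on UNIV (\<lambda>x. f (refl \<alpha> x))" using cont_refl[OF a c(2)] .
  show "continuous_on UNIV (\<lambda>x. complex_of_real (x$l) * diff_quot \<alpha> f x + complex_of_real (\<alpha>$l) * f (refl \<alpha> x))"
    using c cr by (intro continuous_intros)
  fix x assume nz: "\<alpha> \<bullet> x \<noteq> 0"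
  then have nz': "complex_of_real (\<alpha> \<bullet> x) \<noteq> 0" by simp
  show "(complex_of_real (x$l) * f x - complex_of_real ((refl \<alpha> x)$l) * f (refl \<alpha> x)) / complex_of_real (\<alpha> \<bullet> x)
       = complex_of_real (x$l) * diff_quot \<alpha> f x + complex_of_real (\<alpha>$l) * f (refl \<alpha> x)"
    using nz nz' norm2_nz[OF a] by (simp add: dq_off refl_nth[OF a] field_simps)
qed

lemma dq_cmul:
  assumes "\<alpha> \<bullet> \<alpha> = 2" "continuous_on UNIV (diff_quot \<alpha> f)"
  shows "diff_quot \<alpha> (\<lambda>x. c * f x) = (\<lambda>x. c * diff_quot \<alpha> f x)"
  apply (rule dq_ext)
    apply (simp add: norm2_nz assms)
   apply (intro continuous_on_mult continuous_on_const assms)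
  by (simp add: dq_off right_diff_distrib[symmetric])

lemma pf_dq: "pf f \<Longrightarrow> \<alpha> \<bullet> \<alpha> = 2 \<Longrightarrow> pf (diff_quot \<alpha> f)"
proof (induction rule: pf.induct)
  case (pf_const c) then show ?case by (simp add: dq_const pf.pf_const)
next
  case (pf_xmul f l)
  show ?case unfolding dq_xmul[OF pf_xmul.prems pf_cont[OF pf_xmul.IH[OF pf_xmul.prems]] pf_cont[OF pf_xmul.hyps]]
    by (intro pf.pf_add pf.pf_xmul pf_cmul pf_refl pf_xmul pf_xmul.IH pf_xmul.prems)
next
  case (pf_add f g)
  show ?case unfolding dq_add[OF pf_add.prems pf_cont[OF pf_add.IH(1)[OF pf_add.prems]] pf_cont[OF pf_add.IH(2)[OF pf_add.prems]]]
    by (intro pf.pf_add pf_add.IH pf_add.prems)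
qed

lemma dq_add_pf: "\<alpha> \<bullet> \<alpha> = 2 \<Longrightarrow> pf f \<Longrightarrow> pf g \<Longrightarrow> diff_quot \<alpha> (\<lambda>x. f x + g x) = (\<lambda>x. diff_quot \<alpha> f x + diff_quot \<alpha> g x)"
  by (intro dq_add pf_cont pf_dq) auto

lemma dq_xmul_pf: "\<alpha> \<bullet> \<alpha> = 2 \<Longrightarrow> pf f \<Longrightarrow> diff_quot \<alpha> (\<lambda>x. complex_of_real (x$l) * f x)
     = (\<lambda>x. complex_of_real (x$l) * diff_quot \<alpha> f x + complex_of_real (\<alpha>$l) * f (refl \<alpha> x))"
  by (intro dq_xmul pf_cont pf_dq) auto

lemma dq_cmul_pf: "\<alpha> \<bullet> \<alpha> = 2 \<Longrightarrow> pf f \<Longrightarrow> diff_quot \<alpha> (\<lambda>x. c * f x) = (\<lambda>x. c * diff_quot \<alpha> f x)"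
  by (intro dq_cmul pf_cont pf_dq) auto

lemma dq_inner:
  assumes "\<alpha> \<bullet> \<alpha> = 2"
  shows "complex_of_real (\<alpha> \<bullet> x) * diff_quot \<alpha> f x = f x - f (refl \<alpha> x)"
proof (cases "\<alpha> \<bullet> x = 0")
  case True then show ?thesis by (simp add: refl_hyper)
next
  case False then show ?thesis by (simp add: diff_quot_def)
qed

definition gauss :: "real \<Rightarrow> real^'n::finite \<Rightarrow> complex" where
  "gauss a x = exp (complex_of_real (a * norm x ^ 2))"

lemma gauss_refl: "\<alpha> \<bullet> \<alpha> = 2 \<Longrightarrow> gauss a (refl \<alpha> x) = gauss a x"
  by (simp add: gauss_def norm_refl)

lemma gauss_cont: "continuous_on UNIV (gauss a)"
  unfolding gauss_def by (intro continuous_intros)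

lemma gauss_deriv: "(gauss a has_derivative (\<lambda>h. complex_of_real (a * (2 * (x \<bullet> h))) * gauss a x)) (at x)"
proof -
  have e: "gauss a = (\<lambda>x. exp (complex_of_real (a * (x \<bullet> x))))"
    by (auto simp: gauss_def power2_norm_eq_inner)
  have "((\<lambda>x. complex_of_real (a * (x \<bullet> x))) has_derivative (\<lambda>h. complex_of_real (a * (x \<bullet> h + h \<bullet> x)))) (at x)"
    by (intro has_derivative_of_real has_derivative_mult_right has_derivative_inner has_derivative_ident)
  then have "((\<lambda>x. exp (complex_of_real (a * (x \<bullet> x)))) has_derivative (\<lambda>h. complex_of_real (a * (x \<bullet> h + h \<bullet> x)) * exp (complex_of_real (a * (x \<bullet> x))))) (at x)"
  proof -
    have "(exp has_derivative (\<lambda>h. exp (complex_of_real (a * (x \<bullet> x))) * h)) (at (complex_of_real (a * (x \<bullet> x))))"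
      using DERIV_exp has_field_derivative_def by blast
    from has_derivative_compose[OF \<open>(_ has_derivative _) (at x)\<close> this] show ?thesis by (simp add: mult.commute)
  qed
  then show ?thesis unfolding e by (simp add: inner_commute)
qed

lemma gauss_differentiable: "gauss a differentiable (at x)"
  using gauss_deriv differentiable_def by blast

lemma partial_gauss: "partial i (gauss a) x = complex_of_real (2 * a * x$i) * gauss a x"
  using partial_deriv[OF gauss_deriv] by (simp add: inner_axis mult_ac)

lemma dq_gauss:
  assumes "\<alpha> \<bullet> \<alpha> = 2" "pf P"
  shows "diff_quot \<alpha> (\<lambda>x. gauss a x * P x) = (\<lambda>x. gauss a x * diff_quot \<alpha> P x)"
proof (rule dq_ext)
  show "\<alpha> \<noteq> 0" using assms by auto
  show "continuous_on UNIV (\<lambda>x. gauss a x * diff_quot \<alpha> P x)"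
    using gauss_cont pf_cont[OF pf_dq[OF assms(2,1)]] by (intro continuous_intros)
  fix x assume "\<alpha> \<bullet> x \<noteq> 0"
  then show "(gauss a x * P x - gauss a (refl \<alpha> x) * P (refl \<alpha> x)) / complex_of_real (\<alpha> \<bullet> x) = gauss a x * diff_quot \<alpha> P x"
    by (simp add: gauss_refl[OF assms(1)] dq_off right_diff_distrib[symmetric])
qed



locale dsys =
  fixes R Rp :: "(real^'n::finite) set" and \<kappa> :: "real^'n \<Rightarrow> complex"
  assumes rs: "root_system R" and ps: "positive_subsystem R Rp" and gi: "G_invariant R \<kappa>"
begin

lemma R_fin: "finite R" using rs by (simp add: root_system_def)
lemma R_norm: "\<alpha> \<in> R \<Longrightarrow> \<alpha> \<bullet> \<alpha> = 2" using rs by (simp add: root_system_def)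
lemma R_refl: "\<alpha> \<in> R \<Longrightarrow> \<beta> \<in> R \<Longrightarrow> refl \<alpha> \<beta> \<in> R" using rs by (simp add: root_system_def)
lemma Rp_sub: "Rp \<subseteq> R" using ps by (auto simp: positive_subsystem_def)
lemma Rp_fin: "finite Rp" using Rp_sub R_fin finite_subset by blast
lemma Rp_norm: "\<alpha> \<in> Rp \<Longrightarrow> \<alpha> \<bullet> \<alpha> = 2" using Rp_sub R_norm by blast

lemma refl_self: "\<alpha> \<bullet> \<alpha> = 2 \<Longrightarrow> refl \<alpha> \<alpha> = - \<alpha>"
  by (simp add: refl_simp scaleR_2)

lemma R_neg: "\<alpha> \<in> R \<Longrightarrow> - \<alpha> \<in> R"
  using R_refl[of \<alpha> \<alpha>] refl_self[OF R_norm] by simp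

lemma R_split: "\<alpha> \<in> R \<Longrightarrow> \<alpha> \<in> Rp \<or> - \<alpha> \<in> Rp"
proof -
  assume a: "\<alpha> \<in> R"
  obtain \<beta> where b: "\<forall>\<alpha>\<in>R. \<alpha> \<bullet> \<beta> \<noteq> 0" "Rp = {\<alpha>\<in>R. \<alpha> \<bullet> \<beta> > 0}"
    using ps by (auto simp: positive_subsystem_def)
  have "\<alpha> \<bullet> \<beta> > 0 \<or> (-\<alpha>) \<bullet> \<beta> > 0" using b(1) a by auto
  then show ?thesis using b(2) a R_neg by auto
qed

lemma Rp_neg: "\<alpha> \<in> Rp \<Longrightarrow> - \<alpha> \<notin> Rp"
proof -
  obtain \<beta> where b: "\<forall>\<alpha>\<in>R. \<alpha> \<bullet> \<beta> \<noteq> 0" "Rp = {\<alpha>\<in>R. \<alpha> \<bullet> \<beta> > 0}"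
    using ps by (auto simp: positive_subsystem_def)
  then show "\<alpha> \<in> Rp \<Longrightarrow> - \<alpha> \<notin> Rp" by auto
qed

lemma refl_in_G: "\<beta> \<in> R \<Longrightarrow> refl \<beta> \<in> refl_group R"
  using refl_group.step[OF refl_group.id_in, of \<beta> R] by simp

lemma kappa_refl: "\<beta> \<in> R \<Longrightarrow> \<alpha> \<in> R \<Longrightarrow> \<kappa> (refl \<beta> \<alpha>) = \<kappa> \<alpha>"
  using gi refl_in_G by (auto simp: G_invariant_def)

lemma kappa_neg: "\<alpha> \<in> R \<Longrightarrow> \<kappa> (- \<alpha>) = \<kappa> \<alpha>"
  using kappa_refl[of \<alpha> \<alpha>] refl_self[OF R_norm] by simp

abbreviation T where "T \<equiv> dunkl Rp \<kappa>"

lemma T_def': "T i f x = partial i f x + (\<Sum>\<alpha>\<in>Rp. \<kappa> \<alpha> * complex_of_real (\<alpha> $ i) * diff_quot \<alpha> f x)"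
  by (simp add: dunkl_def)

lemma pf_T: "pf f \<Longrightarrow> pf (T i f)"
proof -
  assume f: "pf f"
  have e: "T i f = (\<lambda>x. partial i f x + (\<Sum>\<alpha>\<in>Rp. \<kappa> \<alpha> * complex_of_real (\<alpha> $ i) * diff_quot \<alpha> f x))"
    by (auto simp: dunkl_def)
  have "pf (\<lambda>x. partial i f x + (\<Sum>\<alpha>\<in>Rp. \<kappa> \<alpha> * complex_of_real (\<alpha> $ i) * diff_quot \<alpha> f x))"
    by (intro pf_add pf_partial f pf_sum pf_cmul pf_dq) (auto simp: Rp_norm)
  then show ?thesis unfolding e .
qed

lemma T_add: "pf f \<Longrightarrow> pf g \<Longrightarrow> T i (\<lambda>x. f x + g x) = (\<lambda>x. T i f x + T i g x)"
  by (auto simp: T_def' partial_add pf_differentiable dq_add_pf Rp_norm algebra_simps sum.distrib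
      intro!: sum.cong)

lemma T_cmul: "pf f \<Longrightarrow> T i (\<lambda>x. c * f x) = (\<lambda>x. c * T i f x)"
proof
  fix x assume f: "pf f"
  have "partial i (\<lambda>x. c * f x) x = c * partial i f x"
    using partial_mult[of "\<lambda>x. c" x f i] pf_differentiable[OF f] by (simp add: partial_const)
  then show "T i (\<lambda>x. c * f x) x = c * T i f x"
    by (auto simp: T_def' dq_cmul_pf[OF Rp_norm f] algebra_simps sum_distrib_left intro!: sum.cong)
qed

lemma T_const: "T i (\<lambda>x. c) = (\<lambda>x. 0)"
  by (auto simp: T_def' partial_const dq_const Rp_norm)

lemma T_zero: "T i (\<lambda>x. 0) = (\<lambda>x. 0)"
  using T_const[of i 0] .

lemma T_sum: "finite I \<Longrightarrow> (\<And>a. a \<in> I \<Longrightarrow> pf (F a)) \<Longrightarrow> T i (\<lambda>x. \<Sum>a\<in>I. F a x) = (\<lambda>x. \<Sum>a\<in>I. T i (F a) x)"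
proof (induction I rule: finite_induct)
  case empty then show ?case by (simp add: T_zero)
next
  case (insert a A)
  have "T i (\<lambda>x. \<Sum>a\<in>insert a A. F a x) = T i (\<lambda>x. F a x + (\<Sum>a\<in>A. F a x))"
    using insert by simp
  also have "\<dots> = (\<lambda>x. T i (F a) x + T i (\<lambda>x. \<Sum>a\<in>A. F a x) x)"
    using insert by (intro T_add pf_sum) auto
  finally show ?case using insert by simp
qed

lemma T_xmul: "pf f \<Longrightarrow> T i (\<lambda>x. complex_of_real (x$l) * f x) =
   (\<lambda>x. complex_of_real (x$l) * T i f x + (if i = l then f x else 0)
        + (\<Sum>\<alpha>\<in>Rp. \<kappa> \<alpha> * complex_of_real (\<alpha>$i * \<alpha>$l) * f (refl \<alpha> x)))"
proof
  fix x assume f: "pf f"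
  have "(\<Sum>\<alpha>\<in>Rp. \<kappa> \<alpha> * complex_of_real (\<alpha> $ i) * diff_quot \<alpha> (\<lambda>x. complex_of_real (x$l) * f x) x)
     = (\<Sum>\<alpha>\<in>Rp. complex_of_real (x$l) * (\<kappa> \<alpha> * complex_of_real (\<alpha> $ i) * diff_quot \<alpha> f x)
           + \<kappa> \<alpha> * complex_of_real (\<alpha>$i * \<alpha>$l) * f (refl \<alpha> x))"
    by (intro sum.cong refl) (simp add: dq_xmul_pf[OF Rp_norm f]; simp add: algebra_simps)
  also have "\<dots> = complex_of_real (x$l) * (\<Sum>\<alpha>\<in>Rp. \<kappa> \<alpha> * complex_of_real (\<alpha> $ i) * diff_quot \<alpha> f x)
      + (\<Sum>\<alpha>\<in>Rp. \<kappa> \<alpha> * complex_of_real (\<alpha>$i * \<alpha>$l) * f (refl \<alpha> x))"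
    by (simp add: sum.distrib sum_distrib_left)
  finally have S: "(\<Sum>\<alpha>\<in>Rp. \<kappa> \<alpha> * complex_of_real (\<alpha> $ i) * diff_quot \<alpha> (\<lambda>x. complex_of_real (x$l) * f x) x) = complex_of_real (x$l) * (\<Sum>\<alpha>\<in>Rp. \<kappa> \<alpha> * complex_of_real (\<alpha> $ i) * diff_quot \<alpha> f x)
      + (\<Sum>\<alpha>\<in>Rp. \<kappa> \<alpha> * complex_of_real (\<alpha>$i * \<alpha>$l) * f (refl \<alpha> x))" .
  show "T i (\<lambda>x. complex_of_real (x$l) * f x) x = complex_of_real (x$l) * T i f x + (if i = l then f x else 0)
        + (\<Sum>\<alpha>\<in>Rp. \<kappa> \<alpha> * complex_of_real (\<alpha>$i * \<alpha>$l) * f (refl \<alpha> x))"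
    unfolding T_def' partial_xmul[OF pf_differentiable[OF f]] S by (simp add: algebra_simps)
qed

lemma T_gauss: "pf P \<Longrightarrow> T i (\<lambda>x. gauss a x * P x) = (\<lambda>x. gauss a x * (T i P x + complex_of_real (2 * a * x$i) * P x))"
proof
  fix x assume P: "pf P"
  have "partial i (\<lambda>x. gauss a x * P x) x = complex_of_real (2 * a * x$i) * gauss a x * P x + gauss a x * partial i P x"
    using partial_mult[OF gauss_differentiable pf_differentiable[OF P]] by (simp add: partial_gauss)
  then show "T i (\<lambda>x. gauss a x * P x) x = gauss a x * (T i P x + complex_of_real (2 * a * x$i) * P x)"
    unfolding T_def' by (simp add: dq_gauss[OF Rp_norm P]; simp add: algebra_simps sum_distrib_left)
qed

lemma euler_xT: "pf P \<Longrightarrow> (\<Sum>i\<in>UNIV. complex_of_real (x$i) * T i P x)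
   = euler_op P x + (\<Sum>\<alpha>\<in>Rp. \<kappa> \<alpha> * (P x - P (refl \<alpha> x)))"
proof -
  assume P: "pf P"
  have "(\<Sum>i\<in>UNIV. complex_of_real (x$i) * T i P x)
     = euler_op P x + (\<Sum>i\<in>UNIV. \<Sum>\<alpha>\<in>Rp. \<kappa> \<alpha> * (complex_of_real (x$i * \<alpha> $ i) * diff_quot \<alpha> P x))"
    by (simp add: T_def' euler_op_def algebra_simps sum.distrib sum_distrib_left)
  also have "(\<Sum>i\<in>UNIV. \<Sum>\<alpha>\<in>Rp. \<kappa> \<alpha> * (complex_of_real (x$i * \<alpha> $ i) * diff_quot \<alpha> P x))
     = (\<Sum>\<alpha>\<in>Rp. \<kappa> \<alpha> * (complex_of_real (\<alpha> \<bullet> x) * diff_quot \<alpha> P x))"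
    by (subst sum.swap) (simp add: inner_vec_def of_real_sum sum_distrib_left mult_ac)
  also have "\<dots> = (\<Sum>\<alpha>\<in>Rp. \<kappa> \<alpha> * (P x - P (refl \<alpha> x)))"
    by (intro sum.cong refl) (simp add: dq_inner Rp_norm)
  finally show ?thesis .
qed

end


lemma refl_deriv: "(refl \<beta> has_derivative refl \<beta>) (at x)"
proof -
  have "linear (refl \<beta>)"
    by (rule linearI) (simp_all add: refl_def inner_add_right algebra_simps add_divide_distrib scaleR_add_left)
  then show ?thesis using bounded_linear_imp_has_derivative linear_conv_bounded_linear by blast
qed

lemma refl_lin: "refl \<beta> (u - c *\<^sub>R v) = refl \<beta> u - c *\<^sub>R refl \<beta> v"
  by (simp add: refl_def inner_diff_right algebra_simps diff_divide_distrib flip: scaleR_add_left)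

lemma refl_inner: "\<beta> \<bullet> \<beta> = 2 \<Longrightarrow> refl \<beta> u \<bullet> refl \<beta> v = u \<bullet> v"
  by (simp add: refl_simp inner_diff_left inner_diff_right inner_commute algebra_simps)

lemma refl_conj: "\<beta> \<bullet> \<beta> = 2 \<Longrightarrow> \<alpha> \<bullet> \<alpha> = 2 \<Longrightarrow> refl \<beta> (refl \<alpha> x) = refl (refl \<beta> \<alpha>) (refl \<beta> x)"
proof -
  assume b: "\<beta> \<bullet> \<beta> = 2" and a: "\<alpha> \<bullet> \<alpha> = 2"
  have a': "refl \<beta> \<alpha> \<bullet> refl \<beta> \<alpha> = 2" using refl_inner[OF b] a by simp
  show ?thesis unfolding refl_simp[OF a] refl_simp[OF a'] refl_lin refl_inner[OF b] ..
qed

lemma lin_basis: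
  assumes "linear (D :: real^'n::finite \<Rightarrow> complex)"
  shows "D v = (\<Sum>k\<in>UNIV. complex_of_real (v$k) * D (axis k 1))"
proof -
  have "D v = D (\<Sum>k\<in>UNIV. v$k *\<^sub>R axis k 1)"
    using basis_expansion[of v] by (simp add: scalar_mult_eq_scaleR)
  also have "\<dots> = (\<Sum>k\<in>UNIV. v$k *\<^sub>R D (axis k 1))"
    by (simp add: linear_sum[OF assms] linear_scale[OF assms])
  finally show ?thesis by (simp add: scaleR_conv_of_real)
qed

lemma partial_refl:
  assumes b: "\<beta> \<bullet> \<beta> = 2" and f: "pf f"
  shows "partial j (\<lambda>x. f (refl \<beta> x)) x = partial j f (refl \<beta> x)
     - complex_of_real (\<beta>$j) * (\<Sum>k\<in>UNIV. complex_of_real (\<beta>$k) * partial k f (refl \<beta> x))"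
proof -
  obtain D where D: "(f has_derivative D) (at (refl \<beta> x))"
    using pf_differentiable[OF f] differentiable_def by blast
  have l: "linear D" using D has_derivative_linear by blast
  have "((\<lambda>x. f (refl \<beta> x)) has_derivative (\<lambda>h. D (refl \<beta> h))) (at x)"
    using has_derivative_compose[OF refl_deriv D] .
  then have "partial j (\<lambda>x. f (refl \<beta> x)) x = D (refl \<beta> (axis j 1))" by (rule partial_deriv)
  also have "\<dots> = D (axis j 1) - complex_of_real (\<beta>$j) * D \<beta>"
    by (simp add: refl_simp[OF b] linear_diff[OF l] linear_scale[OF l] inner_axis del: scaleR_conv_of_real) (simp add: scaleR_conv_of_real)
  also have "D \<beta> = (\<Sum>k\<in>UNIV. complex_of_real (\<beta>$k) * D (axis k 1))" by (rule lin_basis[OF l])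
  finally show ?thesis using partial_deriv[OF D] by simp
qed

lemma dq_neg: "\<gamma> \<bullet> \<gamma> = 2 \<Longrightarrow> pf f \<Longrightarrow> diff_quot (-\<gamma>) f = (\<lambda>y. - diff_quot \<gamma> f y)"
proof (rule dq_ext)
  assume a: "\<gamma> \<bullet> \<gamma> = 2" and f: "pf f"
  show "- \<gamma> \<noteq> 0" using norm2_nz[OF a] by simp
  show "continuous_on UNIV (\<lambda>y. - diff_quot \<gamma> f y)"
    by (intro pf_cont pf_minus pf_dq f a)
  fix x assume "- \<gamma> \<bullet> x \<noteq> 0"
  then have "\<gamma> \<bullet> x \<noteq> 0" by simp
  moreover have "refl (-\<gamma>) x = refl \<gamma> x" by (simp add: refl_def)
  ultimately show "(f x - f (refl (- \<gamma>) x)) / complex_of_real (- \<gamma> \<bullet> x) = - diff_quot \<gamma> f x"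
    by (simp add: dq_off divide_simps)
qed

lemma dq_refl:
  assumes b: "\<beta> \<bullet> \<beta> = 2" and a: "\<alpha> \<bullet> \<alpha> = 2" and f: "pf f"
  shows "diff_quot \<alpha> (\<lambda>x. f (refl \<beta> x)) = (\<lambda>x. diff_quot (refl \<beta> \<alpha>) f (refl \<beta> x))"
proof (rule dq_ext)
  have a': "refl \<beta> \<alpha> \<bullet> refl \<beta> \<alpha> = 2" using refl_inner[OF b] a by simp
  show "\<alpha> \<noteq> 0" using norm2_nz[OF a] .
  show "continuous_on UNIV (\<lambda>x. diff_quot (refl \<beta> \<alpha>) f (refl \<beta> x))"
    by (intro cont_refl[OF b] pf_cont pf_dq[OF f a'])
  fix x assume "\<alpha> \<bullet> x \<noteq> 0"
  then have "refl \<beta> \<alpha> \<bullet> refl \<beta> x \<noteq> 0" using refl_inner[OF b] by simp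
  then show "(f (refl \<beta> x) - f (refl \<beta> (refl \<alpha> x))) / complex_of_real (\<alpha> \<bullet> x) = diff_quot (refl \<beta> \<alpha>) f (refl \<beta> x)"
    by (simp add: dq_off refl_conj[OF b a] refl_inner[OF b])
qed

context dsys begin

lemma R_decomp: "R = Rp \<union> uminus ` Rp"
proof
  show "R \<subseteq> Rp \<union> uminus ` Rp"
  proof
    fix \<gamma> assume "\<gamma> \<in> R"
    then have "\<gamma> \<in> Rp \<or> - \<gamma> \<in> Rp" by (rule R_split)
    then show "\<gamma> \<in> Rp \<union> uminus ` Rp" by (auto intro: image_eqI[where x="-\<gamma>"])
  qed
  show "Rp \<union> uminus ` Rp \<subseteq> R" using Rp_sub R_neg by auto
qed

lemma half_sum:
  fixes \<phi> :: "real^'n \<Rightarrow> complex"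
  assumes ev: "\<And>\<gamma>. \<gamma> \<in> R \<Longrightarrow> \<phi> (-\<gamma>) = \<phi> \<gamma>"
  shows "(\<Sum>\<gamma>\<in>R. \<phi> \<gamma>) = 2 * (\<Sum>\<alpha>\<in>Rp. \<phi> \<alpha>)"
proof -
  have d: "Rp \<inter> uminus ` Rp = {}" using Rp_neg by auto
  have "(\<Sum>\<gamma>\<in>R. \<phi> \<gamma>) = (\<Sum>\<gamma>\<in>Rp. \<phi> \<gamma>) + (\<Sum>\<gamma>\<in>uminus ` Rp. \<phi> \<gamma>)"
    by (subst R_decomp, rule sum.union_disjoint) (auto simp: Rp_fin d)
  also have "(\<Sum>\<gamma>\<in>uminus ` Rp. \<phi> \<gamma>) = (\<Sum>\<gamma>\<in>Rp. \<phi> (- \<gamma>))"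
    by (subst sum.reindex) (auto simp: inj_on_def)
  also have "\<dots> = (\<Sum>\<gamma>\<in>Rp. \<phi> \<gamma>)"
    using ev Rp_sub by (intro sum.cong) auto
  finally show ?thesis by simp
qed

lemma refl_image: "\<beta> \<in> R \<Longrightarrow> refl \<beta> ` R = R"
proof
  assume b: "\<beta> \<in> R"
  show "refl \<beta> ` R \<subseteq> R" using R_refl[OF b] by auto
  show "R \<subseteq> refl \<beta> ` R"
  proof
    fix \<gamma> assume "\<gamma> \<in> R"
    then show "\<gamma> \<in> refl \<beta> ` R"
      using refl_refl[OF R_norm[OF b], of \<gamma>] R_refl[OF b] by (metis image_eqI)
  qed
qed

lemma sum_refl_reindex:
  assumes b: "\<beta> \<in> R"
  shows "(\<Sum>\<gamma>\<in>R. \<phi> (refl \<beta> \<gamma>)) = (\<Sum>\<gamma>\<in>R. \<phi> \<gamma>)"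
proof -
  have "inj_on (refl \<beta>) R" by (metis inj_on_inverseI refl_refl[OF R_norm[OF b]])
  then have "(\<Sum>\<gamma>\<in>refl \<beta> ` R. \<phi> \<gamma>) = (\<Sum>\<gamma>\<in>R. \<phi> (refl \<beta> \<gamma>))"
    by (simp add: sum.reindex)
  then show ?thesis using refl_image[OF b] by simp
qed

lemma refl_neg: "refl \<beta> (- \<gamma>) = - refl \<beta> \<gamma>"
  by (simp add: refl_def)

lemma T_refl:
  assumes b: "\<beta> \<in> R" and f: "pf f"
  shows "T j (\<lambda>x. f (refl \<beta> x)) x = T j f (refl \<beta> x)
     - complex_of_real (\<beta>$j) * (\<Sum>k\<in>UNIV. complex_of_real (\<beta>$k) * T k f (refl \<beta> x))"
proof -
  have b2: "\<beta> \<bullet> \<beta> = 2" using R_norm[OF b] .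
  define y where "y = refl \<beta> x"
  define u where "u = refl \<beta> (axis j 1)"
  define \<phi> where "\<phi> \<gamma> = \<kappa> \<gamma> * complex_of_real (\<gamma> \<bullet> u) * diff_quot \<gamma> f y" for \<gamma>
  have ev: "\<phi> (-\<gamma>) = \<phi> \<gamma>" if "\<gamma> \<in> R" for \<gamma>
    using that by (simp add: \<phi>_def kappa_neg dq_neg[OF R_norm f])
  have ev2: "\<phi> (refl \<beta> (-\<gamma>)) = \<phi> (refl \<beta> \<gamma>)" if "\<gamma> \<in> R" for \<gamma>
    unfolding refl_neg using ev R_refl[OF b that] by simp
  have "2 * (\<Sum>\<alpha>\<in>Rp. \<phi> (refl \<beta> \<alpha>)) = (\<Sum>\<gamma>\<in>R. \<phi> (refl \<beta> \<gamma>))"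
    using half_sum[of "\<lambda>\<gamma>. \<phi> (refl \<beta> \<gamma>)"] ev2 by simp
  also have "\<dots> = (\<Sum>\<gamma>\<in>R. \<phi> \<gamma>)" by (rule sum_refl_reindex[OF b])
  also have "\<dots> = 2 * (\<Sum>\<alpha>\<in>Rp. \<phi> \<alpha>)" using half_sum ev by blast
  finally have eq: "(\<Sum>\<alpha>\<in>Rp. \<phi> (refl \<beta> \<alpha>)) = (\<Sum>\<alpha>\<in>Rp. \<phi> \<alpha>)" by simp
  have L: "(\<Sum>\<alpha>\<in>Rp. \<kappa> \<alpha> * complex_of_real (\<alpha> $ j) * diff_quot \<alpha> (\<lambda>x. f (refl \<beta> x)) x)
      = (\<Sum>\<alpha>\<in>Rp. \<phi> (refl \<beta> \<alpha>))"
  proof (intro sum.cong refl)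
    fix \<alpha> assume a: "\<alpha> \<in> Rp"
    then have aR: "\<alpha> \<in> R" using Rp_sub by auto
    have "refl \<beta> \<alpha> \<bullet> u = \<alpha> $ j" unfolding u_def refl_inner[OF b2] by (simp add: inner_axis)
    then show "\<kappa> \<alpha> * complex_of_real (\<alpha> $ j) * diff_quot \<alpha> (\<lambda>x. f (refl \<beta> x)) x = \<phi> (refl \<beta> \<alpha>)"
      by (simp add: \<phi>_def kappa_refl[OF b aR] dq_refl[OF b2 R_norm[OF aR] f] y_def)
  qed
  have R: "(\<Sum>\<alpha>\<in>Rp. \<phi> \<alpha>) = (\<Sum>\<alpha>\<in>Rp. \<kappa> \<alpha> * complex_of_real (\<alpha> $ j) * diff_quot \<alpha> f y)
     - complex_of_real (\<beta>$j) * (\<Sum>k\<in>UNIV. complex_of_real (\<beta>$k) * (\<Sum>\<alpha>\<in>Rp. \<kappa> \<alpha> * complex_of_real (\<alpha> $ k) * diff_quot \<alpha> f y))"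
  proof -
    have "(\<Sum>k\<in>UNIV. complex_of_real (\<beta>$k) * (\<Sum>\<alpha>\<in>Rp. \<kappa> \<alpha> * complex_of_real (\<alpha> $ k) * diff_quot \<alpha> f y))
       = (\<Sum>\<alpha>\<in>Rp. \<kappa> \<alpha> * complex_of_real (\<alpha> \<bullet> \<beta>) * diff_quot \<alpha> f y)"
      apply (simp only: sum_distrib_left)
      apply (subst sum.swap)
      by (simp add: inner_vec_def of_real_sum sum_distrib_left sum_distrib_right mult_ac)
    moreover have "\<phi> \<alpha> = \<kappa> \<alpha> * complex_of_real (\<alpha> $ j) * diff_quot \<alpha> f y - complex_of_real (\<beta>$j) * (\<kappa> \<alpha> * complex_of_real (\<alpha> \<bullet> \<beta>) * diff_quot \<alpha> f y)" for \<alpha>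
      by (simp add: \<phi>_def u_def refl_simp[OF b2] inner_diff_right inner_axis inner_commute algebra_simps)
    ultimately show ?thesis by (simp add: sum_subtractf sum_distrib_left)
  qed
  have "(\<Sum>k\<in>UNIV. complex_of_real (\<beta>$k) * T k f y) = (\<Sum>k\<in>UNIV. complex_of_real (\<beta>$k) * partial k f y)
     + (\<Sum>k\<in>UNIV. complex_of_real (\<beta>$k) * (\<Sum>\<alpha>\<in>Rp. \<kappa> \<alpha> * complex_of_real (\<alpha> $ k) * diff_quot \<alpha> f y))"
    by (simp add: T_def' distrib_left sum.distrib)
  then show ?thesis
    unfolding T_def'[of j "\<lambda>x. f (refl \<beta> x)"] partial_refl[OF b2 f] L eq R y_def[symmetric]
    by (simp add: T_def' algebra_simps)
qed

end



context dsys begin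

lemma TT_xmul:
  assumes f: "pf f"
  shows "T i (T j (\<lambda>x. complex_of_real (x$l) * f x)) x =
     complex_of_real (x$l) * T i (T j f) x + (if i = l then T j f x else 0) + (if j = l then T i f x else 0)
   + (\<Sum>\<alpha>\<in>Rp. \<kappa> \<alpha> * complex_of_real (\<alpha>$i * \<alpha>$l) * T j f (refl \<alpha> x))
   + (\<Sum>\<alpha>\<in>Rp. \<kappa> \<alpha> * complex_of_real (\<alpha>$j * \<alpha>$l) * T i f (refl \<alpha> x))
   - (\<Sum>\<alpha>\<in>Rp. \<kappa> \<alpha> * complex_of_real (\<alpha>$i * \<alpha>$j * \<alpha>$l) * (\<Sum>k\<in>UNIV. complex_of_real (\<alpha>$k) * T k f (refl \<alpha> x)))"
proof -
  define A1 where "A1 = (\<lambda>x. complex_of_real (x$l) * T j f x)"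
  define A2 where "A2 = (\<lambda>x. if j = l then f x else 0)"
  define A3 where "A3 = (\<lambda>x. \<Sum>\<alpha>\<in>Rp. (\<kappa> \<alpha> * complex_of_real (\<alpha>$j * \<alpha>$l)) * f (refl \<alpha> x))"
  have p1: "pf A1" unfolding A1_def by (intro pf_xmul pf_T f)
  have p2: "pf A2" unfolding A2_def by (cases "j = l") (auto intro: f pf_const[of 0, simplified])
  have p3: "pf A3" unfolding A3_def by (intro pf_sum pf_cmul pf_refl f Rp_norm)
  have e1: "T j (\<lambda>x. complex_of_real (x$l) * f x) = (\<lambda>x. A1 x + (A2 x + A3 x))"
    unfolding T_xmul[OF f] A1_def A2_def A3_def by (auto simp: add_ac)
  have "T i (\<lambda>x. A1 x + (A2 x + A3 x)) = (\<lambda>x. T i A1 x + T i (\<lambda>x. A2 x + A3 x) x)"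
    using p1 p2 p3 by (intro T_add pf_add)
  also have "T i (\<lambda>x. A2 x + A3 x) = (\<lambda>x. T i A2 x + T i A3 x)" using p2 p3 by (rule T_add)
  finally have e2: "T i (T j (\<lambda>x. complex_of_real (x$l) * f x)) x = T i A1 x + T i A2 x + T i A3 x"
    unfolding e1 by simp
  have t1: "T i A1 x = complex_of_real (x$l) * T i (T j f) x + (if i = l then T j f x else 0)
        + (\<Sum>\<alpha>\<in>Rp. \<kappa> \<alpha> * complex_of_real (\<alpha>$i * \<alpha>$l) * T j f (refl \<alpha> x))"
    unfolding A1_def T_xmul[OF pf_T[OF f]] ..
  have t2: "T i A2 x = (if j = l then T i f x else 0)"
    unfolding A2_def by (cases "j = l") (simp_all add: T_zero)
  have "T i A3 x = (\<Sum>\<alpha>\<in>Rp. T i (\<lambda>x. (\<kappa> \<alpha> * complex_of_real (\<alpha>$j * \<alpha>$l)) * f (refl \<alpha> x)) x)"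
    unfolding A3_def by (subst T_sum) (auto simp: Rp_fin intro!: pf_cmul pf_refl f Rp_norm)
  also have "\<dots> = (\<Sum>\<alpha>\<in>Rp. (\<kappa> \<alpha> * complex_of_real (\<alpha>$j * \<alpha>$l)) *
        (T i f (refl \<alpha> x) - complex_of_real (\<alpha>$i) * (\<Sum>k\<in>UNIV. complex_of_real (\<alpha>$k) * T k f (refl \<alpha> x))))"
    apply (intro sum.cong refl)
    apply (subst T_cmul)
     apply (intro pf_refl f Rp_norm, assumption)
    using T_refl[OF _ f] Rp_sub by auto
  also have "\<dots> = (\<Sum>\<alpha>\<in>Rp. \<kappa> \<alpha> * complex_of_real (\<alpha>$j * \<alpha>$l) * T i f (refl \<alpha> x))
      - (\<Sum>\<alpha>\<in>Rp. \<kappa> \<alpha> * complex_of_real (\<alpha>$i * \<alpha>$j * \<alpha>$l) * (\<Sum>k\<in>UNIV. complex_of_real (\<alpha>$k) * T k f (refl \<alpha> x)))"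
    by (simp add: sum_subtractf[symmetric] algebra_simps)
  finally have t3: "T i A3 x = \<dots>" .
  show ?thesis unfolding e2 t1 t2 t3 by (simp add: algebra_simps)
qed

lemma T_comm: "pf f \<Longrightarrow> T i (T j f) = T j (T i f)"
proof (induction rule: pf.induct)
  case (pf_const c) then show ?case by (simp add: T_const)
next
  case (pf_xmul f l)
  show ?case
  proof
    fix x
    show "T i (T j (\<lambda>x. complex_of_real (x$l) * f x)) x = T j (T i (\<lambda>x. complex_of_real (x$l) * f x)) x"
      unfolding TT_xmul[OF pf_xmul.hyps, of i j l x] TT_xmul[OF pf_xmul.hyps, of j i l x] pf_xmul.IH
      by (simp add: algebra_simps)
  qed
next
  case (pf_add f g)
  have "T i (T j (\<lambda>x. f x + g x)) = T i (\<lambda>x. T j f x + T j g x)" using pf_add by (simp add: T_add)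
  also have "\<dots> = (\<lambda>x. T i (T j f) x + T i (T j g) x)" using pf_add by (simp add: T_add pf_T)
  also have "\<dots> = (\<lambda>x. T j (T i f) x + T j (T i g) x)" using pf_add by simp
  also have "\<dots> = T j (\<lambda>x. T i f x + T i g x)" using pf_add by (simp add: T_add pf_T)
  also have "\<dots> = T j (T i (\<lambda>x. f x + g x))" using pf_add by (simp add: T_add)
  finally show ?case .
qed

end


lemma norm_sq_sum: "norm (x::real^'n::finite) ^ 2 = (\<Sum>i\<in>UNIV. x$i * x$i)"
  by (simp add: power2_norm_eq_inner inner_vec_def)

context dsys begin

definition Ta :: "real \<Rightarrow> 'n \<Rightarrow> (real^'n \<Rightarrow> complex) \<Rightarrow> real^'n \<Rightarrow> complex" where
  "Ta a i P = (\<lambda>x. T i P x + complex_of_real (2 * a * x$i) * P x)"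

lemma Ta_alt: "Ta a i P = (\<lambda>x. T i P x + complex_of_real (2 * a) * (complex_of_real (x$i) * P x))"
  by (auto simp: Ta_def)

lemma pf_Ta: "pf P \<Longrightarrow> pf (Ta a i P)"
  unfolding Ta_alt by (intro pf_add pf_T pf_cmul pf_xmul)

lemma T_Ta: "pf P \<Longrightarrow> T i (Ta a i P) x = T i (T i P) x + complex_of_real (2 * a) *
   (complex_of_real (x$i) * T i P x + P x + (\<Sum>\<alpha>\<in>Rp. \<kappa> \<alpha> * complex_of_real (\<alpha>$i * \<alpha>$i) * P (refl \<alpha> x)))"
proof -
  assume P: "pf P"
  have "T i (Ta a i P) = (\<lambda>x. T i (T i P) x + T i (\<lambda>x. complex_of_real (2 * a) * (complex_of_real (x$i) * P x)) x)"
    unfolding Ta_alt by (intro T_add pf_T pf_cmul pf_xmul P)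
  also have "T i (\<lambda>x. complex_of_real (2 * a) * (complex_of_real (x$i) * P x)) = (\<lambda>x. complex_of_real (2 * a) * T i (\<lambda>x. complex_of_real (x$i) * P x) x)"
    by (intro T_cmul pf_xmul P)
  finally show ?thesis by (simp add: T_xmul[OF P])
qed

lemma sum_TaTa:
  assumes P: "pf P"
  shows "(\<Sum>i\<in>UNIV. Ta a i (Ta a i P) x) = dunkl_laplacian Rp \<kappa> P x
     + complex_of_real (2 * a) * (2 * euler_op P x + dunkl_dim Rp \<kappa> * P x)
     + complex_of_real (4 * a^2 * norm x ^ 2) * P x"
proof -
  define c where "c = complex_of_real (2 * a)"
  define Y where "Y = (\<Sum>\<alpha>\<in>Rp. \<kappa> \<alpha> * P (refl \<alpha> x))"
  have each: "Ta a i (Ta a i P) x = T i (T i P) x + c * (complex_of_real (x$i) * T i P x) + c * P x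
      + c * (\<Sum>\<alpha>\<in>Rp. \<kappa> \<alpha> * complex_of_real (\<alpha>$i * \<alpha>$i) * P (refl \<alpha> x))
      + c * (complex_of_real (x$i) * T i P x) + c * c * (complex_of_real (x$i * x$i) * P x)" for i
    unfolding Ta_def[of a i "Ta a i P"] T_Ta[OF P] by (simp add: Ta_def c_def algebra_simps)
  have B: "(\<Sum>i\<in>UNIV. \<Sum>\<alpha>\<in>Rp. \<kappa> \<alpha> * complex_of_real (\<alpha>$i * \<alpha>$i) * P (refl \<alpha> x)) = 2 * Y"
  proof -
    have "(\<Sum>i\<in>UNIV. \<Sum>\<alpha>\<in>Rp. \<kappa> \<alpha> * complex_of_real (\<alpha>$i * \<alpha>$i) * P (refl \<alpha> x))
        = (\<Sum>\<alpha>\<in>Rp. \<kappa> \<alpha> * complex_of_real (\<alpha> \<bullet> \<alpha>) * P (refl \<alpha> x))"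
      by (subst sum.swap) (simp add: inner_vec_def of_real_sum sum_distrib_left sum_distrib_right mult_ac)
    also have "\<dots> = 2 * Y" by (simp add: Y_def Rp_norm sum_distrib_left mult_ac)
    finally show ?thesis .
  qed
  have X: "(\<Sum>i\<in>UNIV. complex_of_real (x$i) * T i P x) = euler_op P x + dunkl_gamma Rp \<kappa> * P x - Y"
    unfolding euler_xT[OF P] by (simp add: Y_def dunkl_gamma_def algebra_simps sum_subtractf sum_distrib_right sum_distrib_left)
  have N: "(\<Sum>i\<in>UNIV. complex_of_real (x$i * x$i)) = complex_of_real (norm x ^ 2)"
    by (simp add: norm_sq_sum of_real_sum)
  have "(\<Sum>i\<in>UNIV. Ta a i (Ta a i P) x) = dunkl_laplacian Rp \<kappa> P x
      + c * (\<Sum>i\<in>UNIV. complex_of_real (x$i) * T i P x) + c * of_nat CARD('n) * P x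
      + c * (\<Sum>i\<in>UNIV. \<Sum>\<alpha>\<in>Rp. \<kappa> \<alpha> * complex_of_real (\<alpha>$i * \<alpha>$i) * P (refl \<alpha> x))
      + c * (\<Sum>i\<in>UNIV. complex_of_real (x$i) * T i P x) + c * c * (\<Sum>i\<in>UNIV. complex_of_real (x$i * x$i)) * P x"
    unfolding each by (simp add: sum.distrib dunkl_laplacian_def sum_distrib_left sum_distrib_right mult_ac)
  also have "\<dots> = dunkl_laplacian Rp \<kappa> P x
     + c * (2 * euler_op P x + dunkl_dim Rp \<kappa> * P x) + c * c * complex_of_real (norm x ^ 2) * P x"
    unfolding X B N by (simp add: dunkl_dim_def algebra_simps)
  finally show ?thesis by (simp add: c_def power2_eq_square)
qed

lemma lap_gauss: "pf P \<Longrightarrow> dunkl_laplacian Rp \<kappa> (\<lambda>x. gauss a x * P x) x = gauss a x * (\<Sum>i\<in>UNIV. Ta a i (Ta a i P) x)"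
proof -
  assume P: "pf P"
  have "T i (T i (\<lambda>x. gauss a x * P x)) x = gauss a x * Ta a i (Ta a i P) x" for i
  proof -
    have "T i (\<lambda>x. gauss a x * P x) = (\<lambda>x. gauss a x * Ta a i P x)"
      unfolding T_gauss[OF P] Ta_def ..
    moreover have "T i (\<lambda>x. gauss a x * Ta a i P x) = (\<lambda>x. gauss a x * Ta a i (Ta a i P) x)"
      unfolding T_gauss[OF pf_Ta[OF P]] Ta_def[of a i "Ta a i P"] ..
    ultimately show ?thesis by simp
  qed
  then show ?thesis by (simp add: dunkl_laplacian_def sum_distrib_left)
qed

lemma euler_gauss: "pf P \<Longrightarrow> euler_op (\<lambda>x. gauss a x * P x) x = gauss a x * (euler_op P x + complex_of_real (2 * a * norm x ^ 2) * P x)"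
proof -
  assume P: "pf P"
  have "partial i (\<lambda>x. gauss a x * P x) x = gauss a x * partial i P x + gauss a x * (complex_of_real (2 * a * (x$i))) * P x" for i
    using partial_mult[OF gauss_differentiable pf_differentiable[OF P]] by (simp add: partial_gauss algebra_simps)
  then have "euler_op (\<lambda>x. gauss a x * P x) x = gauss a x * euler_op P x + gauss a x * (complex_of_real (2 * a) * (\<Sum>i\<in>UNIV. complex_of_real (x$i * x$i))) * P x"
    by (simp add: euler_op_def algebra_simps sum.distrib sum_distrib_left sum_distrib_right)
  then show ?thesis by (simp add: norm_sq_sum of_real_sum[symmetric] algebra_simps)
qed

definition D2 :: "(real^'n \<Rightarrow> complex) \<Rightarrow> real^'n \<Rightarrow> complex" where
  "D2 P = (\<lambda>x. - (\<Sum>i\<in>UNIV. Ta (-1) i (Ta (-1) i P) x))"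

lemma pf_D2: "pf P \<Longrightarrow> pf (D2 P)"
  unfolding D2_def by (intro pf_minus pf_sum pf_Ta)

lemma conj1: "pf P \<Longrightarrow>
  (\<lambda>y. - dunkl_laplacian Rp \<kappa> f y - complex_of_real (norm y ^ 2) * f y + 2 * euler_op f y + dunkl_dim Rp \<kappa> * f y)
   = (\<lambda>y. gauss (-1/2) y * D2 P y)" if "f = (\<lambda>x. gauss (-1/2) x * P x)"
proof
  fix y assume P: "pf P"
  show "- dunkl_laplacian Rp \<kappa> f y - complex_of_real (norm y ^ 2) * f y + 2 * euler_op f y + dunkl_dim Rp \<kappa> * f y
       = gauss (-1/2) y * D2 P y"
    unfolding that lap_gauss[OF P] euler_gauss[OF P] sum_TaTa[OF P] D2_def sum_TaTa[OF P, of "-1"]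
    by (simp add: algebra_simps power2_eq_square)
qed

lemma conj2: "pf P \<Longrightarrow> (\<lambda>y. - dunkl_laplacian Rp \<kappa> (\<lambda>x. gauss (-1) x * P x) y) = (\<lambda>y. gauss (-1) y * D2 P y)"
  by (simp add: lap_gauss D2_def)

end


definition pm :: "'n::{finite,linorder} \<Rightarrow> 'n \<Rightarrow> 'n set \<Rightarrow> complex" where
  "pm j i C = (if ({j} - {i}) \<union> ({i} - {j}) = C then cl_sign {j} {i} else 0)"

lemma cl_mult_e: "cl_mult (cl_e j) b C = (\<Sum>B\<in>UNIV. if ({j} - B) \<union> (B - {j}) = C then cl_sign {j} B * b B else 0)"
proof -
  have "cl_mult (cl_e j) b C = (\<Sum>A\<in>UNIV. if A = {j} then (\<Sum>B\<in>UNIV. if (A - B) \<union> (B - A) = C then cl_sign A B * b B else 0) else 0)"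
    unfolding cl_mult_def
  proof (intro sum.cong refl)
    fix A :: "'a set"
    show "(\<Sum>B\<in>UNIV. if (A - B) \<union> (B - A) = C then cl_sign A B * cl_e j A * b B else 0) =
          (if A = {j} then \<Sum>B\<in>UNIV. if (A - B) \<union> (B - A) = C then cl_sign A B * b B else 0 else 0)"
      by (cases "A = {j}") (simp_all add: cl_e_def cong: if_cong)
  qed
  then show ?thesis by simp
qed

lemma cl_mult_e_scalar: fixes j :: "'n::{finite,linorder}" shows "cl_mult (cl_e j) (cl_scalar z) C = (if C = {j} then z else 0)"
proof -
  have "cl_mult (cl_e j) (cl_scalar z) C = (\<Sum>B\<in>(UNIV::'n set set). if B = {} then (if {j} = C then cl_sign {j} {} * z else 0) else 0)"
    unfolding cl_mult_e cl_scalar_def by (rule sum.cong) (auto cong: if_cong)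
  also have "\<dots> = (if {j} = C then cl_sign {j} {} * z else 0)" by simp
  finally show ?thesis by (auto simp: cl_sign_def)
qed

lemma cl_mult_e_vec: fixes j :: "'n::{finite,linorder}"
  shows "cl_mult (cl_e j) (\<lambda>B. \<Sum>i\<in>UNIV. v i * cl_e i B) C = (\<Sum>i\<in>UNIV. v i * pm j i C)"
proof -
  have "cl_mult (cl_e j) (\<lambda>B. \<Sum>i\<in>UNIV. v i * cl_e i B) C
     = (\<Sum>B\<in>UNIV. \<Sum>i\<in>UNIV. if B = {i} then v i * pm j i C else 0)"
    unfolding cl_mult_e
  proof (rule sum.cong[OF refl])
    fix B :: "'n set"
    have "(if ({j} - B) \<union> (B - {j}) = C then cl_sign {j} B * (\<Sum>i\<in>UNIV. v i * cl_e i B) else 0)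
       = (\<Sum>i\<in>UNIV. if ({j} - B) \<union> (B - {j}) = C then cl_sign {j} B * (v i * cl_e i B) else 0)"
      by (simp add: sum_distrib_left)
    also have "\<dots> = (\<Sum>i\<in>UNIV. if B = {i} then v i * pm j i C else 0)"
    proof (rule sum.cong[OF refl])
      fix i
      show "(if ({j} - B) \<union> (B - {j}) = C then cl_sign {j} B * (v i * cl_e i B) else 0) = (if B = {i} then v i * pm j i C else 0)"
        by (cases "B = {i}") (simp_all add: cl_e_def pm_def)
    qed
    finally show "(if ({j} - B) \<union> (B - {j}) = C then cl_sign {j} B * (\<Sum>i\<in>UNIV. v i * cl_e i B) else 0)
       = (\<Sum>i\<in>UNIV. if B = {i} then v i * pm j i C else 0)" .
  qed
  also have "\<dots> = (\<Sum>i\<in>UNIV. \<Sum>B\<in>UNIV. if B = {i} then v i * pm j i C else 0)" by (rule sum.swap)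
  also have "\<dots> = (\<Sum>i\<in>UNIV. v i * pm j i C)" by simp
  finally show ?thesis .
qed

lemma cl_mult_lin: "cl_mult (\<lambda>A. \<Sum>i\<in>I. c i * a i A) b C = (\<Sum>i\<in>I. c i * cl_mult (a i) b C)"
proof -
  have "cl_mult (\<lambda>A. \<Sum>i\<in>I. c i * a i A) b C =
     (\<Sum>A\<in>UNIV. \<Sum>B\<in>UNIV. \<Sum>i\<in>I. c i * (if (A - B) \<union> (B - A) = C then cl_sign A B * a i A * b B else 0))"
    unfolding cl_mult_def by (intro sum.cong refl) (simp add: sum_distrib_left sum_distrib_right mult_ac)
  also have "\<dots> = (\<Sum>A\<in>UNIV. \<Sum>i\<in>I. \<Sum>B\<in>UNIV. c i * (if (A - B) \<union> (B - A) = C then cl_sign A B * a i A * b B else 0))"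
    by (intro sum.cong refl sum.swap)
  also have "\<dots> = (\<Sum>i\<in>I. \<Sum>A\<in>UNIV. \<Sum>B\<in>UNIV. c i * (if (A - B) \<union> (B - A) = C then cl_sign A B * a i A * b B else 0))"
    by (rule sum.swap)
  also have "\<dots> = (\<Sum>i\<in>I. c i * cl_mult (a i) b C)"
    unfolding cl_mult_def by (simp add: sum_distrib_left)
  finally show ?thesis .
qed

lemma cl_vec_lin: "cl_mult (cl_vec x) b C = (\<Sum>i\<in>UNIV. complex_of_real (x$i) * cl_mult (cl_e i) b C)"
  unfolding cl_vec_def by (rule cl_mult_lin)

lemma pm_diag: "pm j j C = (if C = {} then -1 else 0)"
proof -
  have e: "{(i, ja). i = j \<and> ja = j \<and> ja < i} = {}" by auto
  show ?thesis by (auto simp: pm_def cl_sign_def e)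
qed

lemma sign_pair: "i \<noteq> j \<Longrightarrow> cl_sign {j} {i} = (if i < j then -1 else 1)"
proof -
  assume ij: "i \<noteq> j"
  have "{(a, b). a \<in> {j} \<and> b \<in> {i} \<and> b < a} = (if i < j then {(j, i)} else {})" by auto
  moreover have "{j} \<inter> {i} = {}" using ij by auto
  ultimately show ?thesis by (simp add: cl_sign_def)
qed

lemma pm_anti: "i \<noteq> j \<Longrightarrow> pm j i C + pm i j C = 0"
proof -
  assume ij: "i \<noteq> j"
  have "({j} - {i}) \<union> ({i} - {j}) = ({i} - {j}) \<union> ({j} - {i})" by auto
  moreover have "cl_sign {j} {i} = - cl_sign {i} {j}" using sign_pair[OF ij] sign_pair[of j i] ij by auto
  ultimately show ?thesis by (simp add: pm_def)
qed

lemma sym_pm: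
  fixes M :: "'n::{finite,linorder} \<Rightarrow> 'n \<Rightarrow> complex"
  assumes sym: "\<And>i j. M j i = M i j"
  shows "(\<Sum>j\<in>UNIV. \<Sum>i\<in>UNIV. M j i * pm j i C) = (if C = {} then - (\<Sum>j\<in>UNIV. M j j) else 0)"
proof -
  let ?S = "(\<Sum>j\<in>UNIV. \<Sum>i\<in>UNIV. M j i * pm j i C)"
  have "?S = (\<Sum>i\<in>UNIV. \<Sum>j\<in>UNIV. M j i * pm j i C)" by (rule sum.swap)
  also have "\<dots> = (\<Sum>j\<in>UNIV. \<Sum>i\<in>UNIV. M j i * pm i j C)" using sym by simp
  finally have "2 * ?S = (\<Sum>j\<in>UNIV. \<Sum>i\<in>UNIV. M j i * (pm j i C + pm i j C))"
    by (simp add: algebra_simps sum.distrib)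
  also have "\<dots> = (\<Sum>j\<in>UNIV. \<Sum>i\<in>UNIV. if i = j then 2 * M j j * pm j j C else 0)"
    by (intro sum.cong refl) (auto simp: pm_anti)
  also have "\<dots> = 2 * (\<Sum>j\<in>UNIV. M j j * pm j j C)" by (simp add: sum_distrib_left mult.assoc)
  finally have "?S = (\<Sum>j\<in>UNIV. M j j * pm j j C)" by simp
  then show ?thesis by (simp add: pm_diag sum_negf)
qed



locale dsys2 = dsys R Rp \<kappa> for R Rp :: "((real,'n::{finite,linorder}) vec) set" and \<kappa> :: "(real,'n) vec \<Rightarrow> complex"
begin

lemma T_Ta2: "pf P \<Longrightarrow> T j (Ta a i P) x = T j (T i P) x + complex_of_real (2 * a) *
   (complex_of_real (x$i) * T j P x + (if j = i then P x else 0) + (\<Sum>\<alpha>\<in>Rp. \<kappa> \<alpha> * complex_of_real (\<alpha>$j * \<alpha>$i) * P (refl \<alpha> x)))"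
proof -
  assume P: "pf P"
  have "T j (Ta a i P) = (\<lambda>x. T j (T i P) x + T j (\<lambda>x. complex_of_real (2 * a) * (complex_of_real (x$i) * P x)) x)"
    unfolding Ta_alt by (intro T_add pf_T pf_cmul pf_xmul P)
  also have "T j (\<lambda>x. complex_of_real (2 * a) * (complex_of_real (x$i) * P x)) = (\<lambda>x. complex_of_real (2 * a) * T j (\<lambda>x. complex_of_real (x$i) * P x) x)"
    by (intro T_cmul pf_xmul P)
  finally show ?thesis by (simp add: T_xmul[OF P])
qed

lemma TaTa_comm: "pf P \<Longrightarrow> Ta a j (Ta a i P) x = Ta a i (Ta a j P) x"
proof -
  assume P: "pf P"
  have s: "(\<Sum>\<alpha>\<in>Rp. \<kappa> \<alpha> * complex_of_real (\<alpha>$j * \<alpha>$i) * P (refl \<alpha> x)) = (\<Sum>\<alpha>\<in>Rp. \<kappa> \<alpha> * complex_of_real (\<alpha>$i * \<alpha>$j) * P (refl \<alpha> x))"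
    by (simp add: mult.commute)
  show ?thesis
    unfolding Ta_def[of a j "Ta a i P"] Ta_def[of a i "Ta a j P"] T_Ta2[OF P] s T_comm[OF P, of j i]
    by (simp add: Ta_def algebra_simps)
qed

lemma T_neg: "pf f \<Longrightarrow> T j (\<lambda>y. - f y) = (\<lambda>y. - T j f y)"
  using T_cmul[of f j "-1"] by simp

lemma Ta_neg: "pf f \<Longrightarrow> Ta a j (\<lambda>y. - f y) = (\<lambda>y. - Ta a j f y)"
  by (auto simp: Ta_def T_neg)

lemma T_rmul: "pf f \<Longrightarrow> T j (\<lambda>y. f y * c) = (\<lambda>y. T j f y * c)"
  using T_cmul[of f j c] by (simp add: mult.commute)

lemma DP_scalar: "pf P \<Longrightarrow> D_plus Rp \<kappa> (\<lambda>x. cl_scalar (P x)) = (\<lambda>x C. \<Sum>i\<in>UNIV. (- Ta (-1) i P x) * cl_e i C)"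
proof (intro ext)
  fix x C assume P: "pf P"
  have dc: "dunkl_cl Rp \<kappa> i (\<lambda>x. cl_scalar (P x)) x = cl_scalar (T i P x)" for i
  proof
    fix A
    show "dunkl_cl Rp \<kappa> i (\<lambda>x. cl_scalar (P x)) x A = cl_scalar (T i P x) A"
      by (cases "A = {}") (simp_all add: dunkl_cl_def cl_scalar_def T_zero)
  qed
  have "D_plus Rp \<kappa> (\<lambda>x. cl_scalar (P x)) x C = (\<Sum>i\<in>UNIV. - (if C = {i} then T i P x else 0))
      + 2 * (\<Sum>i\<in>UNIV. complex_of_real (x$i) * (if C = {i} then P x else 0))"
    by (simp add: D_plus_def dunkl_dirac_def dc cl_mult_e_scalar cl_vec_lin sum_negf)
  also have "\<dots> = (\<Sum>i\<in>UNIV. (- Ta (-1) i P x) * cl_e i C)"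
    by (simp add: sum_distrib_left sum.distrib[symmetric] Ta_def cl_e_def algebra_simps if_distrib cong: if_cong)
  finally show "D_plus Rp \<kappa> (\<lambda>x. cl_scalar (P x)) x C = (\<Sum>i\<in>UNIV. (- Ta (-1) i P x) * cl_e i C)" .
qed

lemma DP_vec:
  assumes V: "\<And>i. pf (V i)"
  shows "D_plus Rp \<kappa> (\<lambda>x C. \<Sum>i\<in>UNIV. V i x * cl_e i C) x C = (\<Sum>j\<in>UNIV. \<Sum>i\<in>UNIV. (- Ta (-1) j (V i) x) * pm j i C)"
proof -
  have dc: "dunkl_cl Rp \<kappa> j (\<lambda>x C. \<Sum>i\<in>UNIV. V i x * cl_e i C) x = (\<lambda>A. \<Sum>i\<in>UNIV. T j (V i) x * cl_e i A)" for j
  proof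
    fix A
    have "T j (\<lambda>y. \<Sum>i\<in>UNIV. V i y * cl_e i A) = (\<lambda>y. \<Sum>i\<in>UNIV. T j (\<lambda>y. V i y * cl_e i A) y)"
      by (rule T_sum) (auto intro: pf_cmul V simp: mult.commute[of _ "cl_e _ A"])
    then show "dunkl_cl Rp \<kappa> j (\<lambda>x C. \<Sum>i\<in>UNIV. V i x * cl_e i C) x A = (\<Sum>i\<in>UNIV. T j (V i) x * cl_e i A)"
      by (simp add: dunkl_cl_def T_rmul[OF V])
  qed
  have "D_plus Rp \<kappa> (\<lambda>x C. \<Sum>i\<in>UNIV. V i x * cl_e i C) x C =
      - (\<Sum>j\<in>UNIV. \<Sum>i\<in>UNIV. T j (V i) x * pm j i C) + 2 * (\<Sum>j\<in>UNIV. complex_of_real (x$j) * (\<Sum>i\<in>UNIV. V i x * pm j i C))"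
    by (simp add: D_plus_def dunkl_dirac_def dc cl_mult_e_vec cl_vec_lin)
  also have "\<dots> = (\<Sum>j\<in>UNIV. \<Sum>i\<in>UNIV. (- Ta (-1) j (V i) x) * pm j i C)"
    by (simp add: Ta_def sum_distrib_left sum_negf sum.distrib[symmetric] algebra_simps)
  finally show ?thesis .
qed

lemma DD: "pf P \<Longrightarrow> D_plus Rp \<kappa> (D_plus Rp \<kappa> (\<lambda>x. cl_scalar (P x))) = (\<lambda>x. cl_scalar (D2 P x))"
proof (intro ext)
  fix x C assume P: "pf P"
  define V where "V i = (\<lambda>x. - Ta (-1) i P x)" for i
  have V: "pf (V i)" for i unfolding V_def by (intro pf_minus pf_Ta P)
  have e: "D_plus Rp \<kappa> (\<lambda>x. cl_scalar (P x)) = (\<lambda>x C. \<Sum>i\<in>UNIV. V i x * cl_e i C)"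
    unfolding DP_scalar[OF P] V_def ..
  have m: "- Ta (-1) j (V i) x = Ta (-1) j (Ta (-1) i P) x" for i j
    unfolding V_def Ta_neg[OF pf_Ta[OF P]] by simp
  have "D_plus Rp \<kappa> (D_plus Rp \<kappa> (\<lambda>x. cl_scalar (P x))) x C = (\<Sum>j\<in>UNIV. \<Sum>i\<in>UNIV. Ta (-1) j (Ta (-1) i P) x * pm j i C)"
    unfolding e DP_vec[OF V] m ..
  also have "\<dots> = (if C = {} then - (\<Sum>j\<in>UNIV. Ta (-1) j (Ta (-1) j P) x) else 0)"
    by (rule sym_pm) (rule TaTa_comm[OF P])
  also have "\<dots> = cl_scalar (D2 P x) C" by (simp add: cl_scalar_def D2_def)
  finally show "D_plus Rp \<kappa> (D_plus Rp \<kappa> (\<lambda>x. cl_scalar (P x))) x C = cl_scalar (D2 P x) C" .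
qed

lemma pf_D2_iter: "pf P \<Longrightarrow> pf ((D2 ^^ n) P)"
  by (induction n) (auto intro: pf_D2)

lemma iterD: "pf P \<Longrightarrow> (D_plus Rp \<kappa> ^^ (2 * n)) (\<lambda>x. cl_scalar (P x)) = (\<lambda>x. cl_scalar ((D2 ^^ n) P x))"
proof (induction n)
  case 0 then show ?case by simp
next
  case (Suc n)
  have "(D_plus Rp \<kappa> ^^ (2 * Suc n)) (\<lambda>x. cl_scalar (P x)) = D_plus Rp \<kappa> (D_plus Rp \<kappa> ((D_plus Rp \<kappa> ^^ (2 * n)) (\<lambda>x. cl_scalar (P x))))"
    by simp
  also have "\<dots> = (\<lambda>x. cl_scalar (D2 ((D2 ^^ n) P) x))"
    unfolding Suc.IH[OF Suc.prems] by (rule DD[OF pf_D2_iter[OF Suc.prems]])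
  finally show ?case by simp
qed

lemma iterA: "pf P \<Longrightarrow>
  ((\<lambda>f y. - dunkl_laplacian Rp \<kappa> f y - complex_of_real (norm y ^ 2) * f y + 2 * euler_op f y + dunkl_dim Rp \<kappa> * f y) ^^ n)
    (\<lambda>y. gauss (-1/2) y * P y) = (\<lambda>y. gauss (-1/2) y * (D2 ^^ n) P y)"
proof (induction n)
  case 0 then show ?case by simp
next
  case (Suc n)
  show ?case using conj1[OF refl pf_D2_iter[OF Suc.prems, of n]] Suc by simp
qed

lemma iterL: "pf P \<Longrightarrow>
  ((\<lambda>f y. - dunkl_laplacian Rp \<kappa> f y) ^^ n) (\<lambda>y. gauss (-1) y * P y) = (\<lambda>y. gauss (-1) y * (D2 ^^ n) P y)"
proof (induction n)
  case 0 then show ?case by simp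
next
  case (Suc n)
  show ?case using conj2[OF pf_D2_iter[OF Suc.prems, of n]] Suc by simp
qed

end

lemma pf_homog: "homogeneous_poly k H \<Longrightarrow> pf (\<lambda>y. complex_of_real (H y))"
proof -
  assume "homogeneous_poly k H"
  then obtain c where c: "H = (\<lambda>x. \<Sum>a\<in>{a. sum a UNIV = k}. c a * (\<Prod>i\<in>UNIV. (x $ i) ^ a i))"
    by (auto simp: homogeneous_poly_def)
  have e: "(\<lambda>y. complex_of_real (H y)) = (\<lambda>y. \<Sum>a\<in>{a. sum a UNIV = k}. complex_of_real (c a) * (\<Prod>i\<in>UNIV. complex_of_real (y $ i) ^ a i))"
    unfolding c by (simp add: of_real_sum of_real_prod)
  have "pf (\<lambda>y. \<Sum>a\<in>{a. sum a UNIV = k}. complex_of_real (c a) * (\<Prod>i\<in>UNIV. complex_of_real (y $ i) ^ a i))"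
    by (intro pf_sum pf_cmul pf_prod pf_power pf_coord)
  then show ?thesis unfolding e .
qed

theorem theorem3p2:
  fixes R Rp :: "((real,'n::{finite,linorder}) vec) set"
    and \<kappa> :: "(real,'n) vec \<Rightarrow> complex"
    and H :: "(real,'n) vec \<Rightarrow> real"
    and k t :: nat
  assumes "root_system R"
    and "positive_subsystem R Rp"
    and "G_invariant R \<kappa>"
    and "dunkl_harmonic Rp \<kappa> k H"
    and "t > 0"
  shows "clifford_hermite Rp \<kappa> (2 * t) H
           = (\<lambda>x. cl_scalar (exp (complex_of_real (norm x ^ 2 / 2)) *
               (((\<lambda>f y. - dunkl_laplacian Rp \<kappa> f y - complex_of_real (norm y ^ 2) * f y
                         + 2 * euler_op f y + dunkl_dim Rp \<kappa> * f y) ^^ t)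
                  (\<lambda>y. exp (complex_of_real (- (norm y ^ 2) / 2)) * complex_of_real (H y))) x))
         \<and> clifford_hermite Rp \<kappa> (2 * t) H
           = (\<lambda>x. cl_scalar (exp (complex_of_real (norm x ^ 2)) *
               (((\<lambda>f y. - dunkl_laplacian Rp \<kappa> f y) ^^ t)
                  (\<lambda>y. exp (complex_of_real (- (norm y ^ 2))) * complex_of_real (H y))) x))"
proof -
  interpret d: dsys2 R Rp \<kappa> by unfold_locales (fact assms)+
  define P where "P = (\<lambda>y. complex_of_real (H y))"
  have P: "pf P" unfolding P_def using assms(4) pf_homog by (auto simp: dunkl_harmonic_def)
  have CH: "clifford_hermite Rp \<kappa> (2 * t) H = (\<lambda>x. cl_scalar ((d.D2 ^^ t) P x))"
    unfolding clifford_hermite_def using d.iterD[OF P] by (simp add: P_def)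
  have g1: "(\<lambda>y. exp (complex_of_real (- (norm y ^ 2) / 2)) * complex_of_real (H y)) = (\<lambda>y. gauss (-1/2) y * P y)"
    by (simp add: gauss_def P_def)
  have g2: "(\<lambda>y. exp (complex_of_real (- (norm y ^ 2))) * complex_of_real (H y)) = (\<lambda>y. gauss (-1) y * P y)"
    by (simp add: gauss_def P_def)
  have e1: "exp (complex_of_real (norm x ^ 2 / 2)) * gauss (-1/2) x = 1" for x :: "(real,'n) vec"
    by (simp add: gauss_def exp_add[symmetric])
  have e2: "exp (complex_of_real (norm x ^ 2)) * gauss (-1) x = 1" for x :: "(real,'n) vec"
    by (simp add: gauss_def exp_add[symmetric])
  show ?thesis
    unfolding CH g1 g2 d.iterA[OF P] d.iterL[OF P]
    by (simp only: mult.assoc[symmetric] e1 e2 mult_1_left simp_thms)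
qed


end
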